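(* Let $\mathbf{C}$ be a finitary adhesive category with a strict initial object $\varnothing$, in which all final pullback complements (FPCs) along monomorphisms exist and monomorphisms are stable under FPCs. Let $\{p_j=(O_j\xleftarrow{}K_j\xrightarrow{}I_j)\}_{j\in\mathcal{J}}$ be a finite family of linear rules and $\{\kappa_j\}_{j\in\mathcal{J}}$ non-zero parameters $\kappa_j\in\mathbb{R}_{\geq 0}$ (base rates). For an object $M$ put $\mathbb{O}^{sq}_M:=\rho^{sq}_{\mathbf{C}}(\delta(M\xleftarrow{id_M}M\xrightarrow{id_M}M))$, and define $$H:=\hat{H}+\bar{H},\qquad \hat{H}:=\sum_{j\in\mathcal{J}}\kappa_j\,\rho^{sq}_{\mathbf{C}}(\delta(p_j)),\qquad \bar{H}:=-\sum_{j\in\mathcal{J}}\kappa_j\,\mathbb{O}^{sq}_{I_j}.$$ Then: (1) $H$ is the infinitesimal generator (Hamiltonian) of a continuous-time Markov chain; namely, writing $H|X\rangle=\sum_Y h_{X,Y}|Y\rangle$ (a finite sum over isomorphism classes $Y$ of objects), one has $h_{X,X}\leq 0$, $h_{X,Y}\geq 0$ for $Y\not\cong X$, and $\sum_Y h_{X,Y}=0$ for every $X$ (equivalently $\langle|H=0$). (2) For every object $M$, $\mathbb{O}^{sq}_M$ is an observable, i.e. a diagonal operator: $\mathbb{O}^{sq}_M|X\rangle=\omega_M(X)|X\rangle$ with $\omega_M(X)\in\mathbb{R}$ for every object $X$ (in fact $\omega_M(X)$ is the number of monomorphisms $M\to X$). (3) (Jump-closure) For every linear rule $p=(O\xleftarrow{o}K\xrightarrow{i}I)\in\mathrm{Lin}(\mathbf{C})$,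 $$\langle|\,\rho^{sq}_{\mathbf{C}}(\delta(p))=\langle|\,\mathbb{O}^{sq}_I.$$
   Context: A category is adhesive if it has pushouts along monomorphisms, has pullbacks, and pushouts along monomorphisms are van Kampen squares; finitary if every object has finitely many subobjects; a strict initial object is an initial object $\varnothing$ such that every morphism $X\to\varnothing$ is an isomorphism. FPC: given $a:A\to B$, $c:B\to C$, a pair $(d:D\to C,b:A\to D)$ is an FPC of $(c,a)$ if $c\circ a=d\circ b$, the square is a pullback, and for all $x:E\to B$, $y:E\to F$, $z:F\to C$, $w:E\to A$ with $(E,x,y)$ a pullback of $(c,z)$ and $a\circ w=x$, there is a unique $w^*:F\to D$ with $d\circ w^*=z$, $w^*\circ y=b\circ w$. The assumption means: for composable monomorphisms $K\xrightarrow{i}I\xrightarrow{m}X$ an FPC of $(m,i)$ exists and consists of monomorphisms. $\mathrm{Lin}(\mathbf{C})$: isomorphism classes of spans of monomorphisms $p=(O\xleftarrow{o}K\xrightarrow{i}I)$. SqPO derivation: $\mathsf{M}_p(X)$ is the set of monomorphisms $m:I\to X$; for such $m$ let $(i':\overline{K}\to X,k:K\to\overline{K})$ be the FPC of $(m,i)$ and let $p_m(X)$ be the pushout of $O\xleftarrow{o}K\xrightarrow{k}\overline{K}$. $\mathcal{R}_{\mathbf{C}}$ is the free $\mathbb{R}$-vector space with basis $\{\delta(p)\mid p\in\mathrm{Lin}(\mathbf{C})\}$. $\hat{\mathbf{C}}$ is the free $\mathbb{R}$-vector space with basis vectors $|X\rangle$ indexed by isomorphism classes of objects. The canonical representation: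 $\rho^{sq}_{\mathbf{C}}(\delta(p))|X\rangle:=\sum_{m\in\mathsf{M}_p(X)}|p_m(X)\rangle$ ($=0$ if $\mathsf{M}_p(X)=\emptyset$), extended linearly. The projection $\langle|$ is the linear functional with $\langle|X\rangle=1$ for every basis vector $|X\rangle$; $\langle|A=\langle|B$ for operators $A,B$ means $\langle|A|X\rangle=\langle|B|X\rangle$ for all $X$. *)

theory Defs
  imports Complex_Main
begin

record ('o, 'a) cat =
  Ob  :: "'o set"
  Ar  :: "'a set"
  Dom :: "'a \<Rightarrow> 'o"
  Cod :: "'a \<Rightarrow> 'o"
  Comp :: "'a \<Rightarrow> 'a \<Rightarrow> 'a"   (* Comp C g f = g o f *)
  Idt :: "'o \<Rightarrow> 'a"

definition is_category :: "('o,'a) cat \<Rightarrow> bool" where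
  "is_category C \<longleftrightarrow>
     (\<forall>f\<in>Ar C. Dom C f \<in> Ob C \<and> Cod C f \<in> Ob C) \<and>
     (\<forall>X\<in>Ob C. Idt C X \<in> Ar C \<and> Dom C (Idt C X) = X \<and> Cod C (Idt C X) = X) \<and>
     (\<forall>f\<in>Ar C. \<forall>g\<in>Ar C. Cod C f = Dom C g \<longrightarrow>
         Comp C g f \<in> Ar C \<and> Dom C (Comp C g f) = Dom C f \<and> Cod C (Comp C g f) = Cod C g) \<and>
     (\<forall>f\<in>Ar C. Comp C f (Idt C (Dom C f)) = f \<and> Comp C (Idt C (Cod C f)) f = f) \<and>
     (\<forall>f\<in>Ar C. \<forall>g\<in>Ar C. \<forall>h\<in>Ar C. Cod C f = Dom C g \<longrightarrow> Cod C g = Dom C h \<longrightarrow>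
         Comp C h (Comp C g f) = Comp C (Comp C h g) f)"

definition hom :: "('o,'a) cat \<Rightarrow> 'o \<Rightarrow> 'o \<Rightarrow> 'a set" where
  "hom C X Y = {f \<in> Ar C. Dom C f = X \<and> Cod C f = Y}"

definition monic :: "('o,'a) cat \<Rightarrow> 'a \<Rightarrow> bool" where
  "monic C m \<longleftrightarrow> m \<in> Ar C \<and>
     (\<forall>f\<in>Ar C. \<forall>g\<in>Ar C. Cod C f = Dom C m \<longrightarrow> Cod C g = Dom C m \<longrightarrow> Dom C f = Dom C g \<longrightarrow>
        Comp C m f = Comp C m g \<longrightarrow> f = g)"

definition isomorphism :: "('o,'a) cat \<Rightarrow> 'a \<Rightarrow> bool" where
  "isomorphism C f \<longleftrightarrow> f \<in> Ar C \<and>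
     (\<exists>g\<in>Ar C. Dom C g = Cod C f \<and> Cod C g = Dom C f \<and>
        Comp C g f = Idt C (Dom C f) \<and> Comp C f g = Idt C (Cod C f))"

definition iso_obj :: "('o,'a) cat \<Rightarrow> 'o \<Rightarrow> 'o \<Rightarrow> bool" where
  "iso_obj C X Y \<longleftrightarrow> X \<in> Ob C \<and> Y \<in> Ob C \<and> (\<exists>f\<in>hom C X Y. isomorphism C f)"

text \<open>Commutative square
    A --a--> B
    |b       |c
    C --d--> D     with c o a = d o b.\<close>
definition comm_sq :: "('o,'a) cat \<Rightarrow> 'a \<Rightarrow> 'a \<Rightarrow> 'a \<Rightarrow> 'a \<Rightarrow> bool" where
  "comm_sq C a b c d \<longleftrightarrow> a \<in> Ar C \<and> b \<in> Ar C \<and> c \<in> Ar C \<and> d \<in> Ar C \<and>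
     Dom C a = Dom C b \<and> Cod C a = Dom C c \<and> Cod C b = Dom C d \<and> Cod C c = Cod C d \<and>
     Comp C c a = Comp C d b"

definition is_pullback :: "('o,'a) cat \<Rightarrow> 'a \<Rightarrow> 'a \<Rightarrow> 'a \<Rightarrow> 'a \<Rightarrow> bool" where
  "is_pullback C a b c d \<longleftrightarrow> comm_sq C a b c d \<and>
     (\<forall>x\<in>Ar C. \<forall>y\<in>Ar C. Dom C x = Dom C y \<longrightarrow> Cod C x = Dom C c \<longrightarrow> Cod C y = Dom C d \<longrightarrow>
        Comp C c x = Comp C d y \<longrightarrow>
        (\<exists>!u. u \<in> Ar C \<and> Dom C u = Dom C x \<and> Cod C u = Dom C a \<and>
              Comp C a u = x \<and> Comp C b u = y))"

definition is_pushout :: "('o,'a) cat \<Rightarrow> 'a \<Rightarrow> 'a \<Rightarrow> 'a \<Rightarrow> 'a \<Rightarrow> bool" where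
  "is_pushout C a b c d \<longleftrightarrow> comm_sq C a b c d \<and>
     (\<forall>x\<in>Ar C. \<forall>y\<in>Ar C. Cod C x = Cod C y \<longrightarrow> Dom C x = Cod C a \<longrightarrow> Dom C y = Cod C b \<longrightarrow>
        Comp C x a = Comp C y b \<longrightarrow>
        (\<exists>!u. u \<in> Ar C \<and> Dom C u = Cod C c \<and> Cod C u = Cod C x \<and>
              Comp C u c = x \<and> Comp C u d = y))"

definition van_kampen :: "('o,'a) cat \<Rightarrow> 'a \<Rightarrow> 'a \<Rightarrow> 'a \<Rightarrow> 'a \<Rightarrow> bool" where
  "van_kampen C a b c d \<longleftrightarrow> is_pushout C a b c d \<and>
     (\<forall>a' b' c' d' \<alpha>A \<alpha>B \<alpha>C \<alpha>D.
        comm_sq C a' b' c' d' \<and>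
        comm_sq C a' \<alpha>A \<alpha>B a \<and> comm_sq C b' \<alpha>A \<alpha>C b \<and>
        comm_sq C c' \<alpha>B \<alpha>D c \<and> comm_sq C d' \<alpha>C \<alpha>D d \<and>
        is_pullback C a' \<alpha>A \<alpha>B a \<and> is_pullback C b' \<alpha>A \<alpha>C b \<longrightarrow>
        (is_pushout C a' b' c' d' \<longleftrightarrow>
           is_pullback C c' \<alpha>B \<alpha>D c \<and> is_pullback C d' \<alpha>C \<alpha>D d))"

definition adhesive :: "('o,'a) cat \<Rightarrow> bool" where
  "adhesive C \<longleftrightarrow>
     (\<forall>c\<in>Ar C. \<forall>d\<in>Ar C. Cod C c = Cod C d \<longrightarrow> (\<exists>a b. is_pullback C a b c d)) \<and>
     (\<forall>a\<in>Ar C. \<forall>b\<in>Ar C. Dom C a = Dom C b \<longrightarrow> (monic C a \<or> monic C b) \<longrightarrow>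
         (\<exists>c d. is_pushout C a b c d)) \<and>
     (\<forall>a b c d. is_pushout C a b c d \<longrightarrow> (monic C a \<or> monic C b) \<longrightarrow> van_kampen C a b c d)"

definition subobj_rel :: "('o,'a) cat \<Rightarrow> 'o \<Rightarrow> ('a \<times> 'a) set" where
  "subobj_rel C X = {(m, m'). monic C m \<and> monic C m' \<and> Cod C m = X \<and> Cod C m' = X \<and>
      (\<exists>h. isomorphism C h \<and> Dom C h = Dom C m \<and> Cod C h = Dom C m' \<and> Comp C m' h = m)}"

definition finitary :: "('o,'a) cat \<Rightarrow> bool" where
  "finitary C \<longleftrightarrow> (\<forall>X\<in>Ob C. finite ({m. monic C m \<and> Cod C m = X} // subobj_rel C X))"

definition strict_initial :: "('o,'a) cat \<Rightarrow> 'o \<Rightarrow> bool" where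
  "strict_initial C Z \<longleftrightarrow> Z \<in> Ob C \<and> (\<forall>X\<in>Ob C. \<exists>!f. f \<in> hom C Z X) \<and>
     (\<forall>X\<in>Ob C. \<forall>f\<in>hom C X Z. isomorphism C f)"

text \<open>Final pullback complement: (d, b) is an FPC of (c, a), where a : A -> B, c : B -> C,
  d : D -> C, b : A -> D.\<close>
definition is_FPC :: "('o,'a) cat \<Rightarrow> 'a \<Rightarrow> 'a \<Rightarrow> 'a \<Rightarrow> 'a \<Rightarrow> bool" where
  "is_FPC C c a d b \<longleftrightarrow> is_pullback C a b c d \<and>
     (\<forall>x y z w. is_pullback C x y c z \<and> w \<in> Ar C \<and> Dom C w = Dom C x \<and> Cod C w = Dom C a \<and>
        Comp C a w = x \<longrightarrow>
        (\<exists>!u. u \<in> Ar C \<and> Dom C u = Cod C y \<and> Cod C u = Dom C d \<and>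
              Comp C d u = z \<and> Comp C u y = Comp C b w))"

definition FPCs_of_monos :: "('o,'a) cat \<Rightarrow> bool" where
  "FPCs_of_monos C \<longleftrightarrow> (\<forall>i m. monic C i \<and> monic C m \<and> Cod C i = Dom C m \<longrightarrow>
      (\<exists>d b. is_FPC C m i d b \<and> monic C d \<and> monic C b))"

text \<open>A linear rule (O <-o- K -i-> I) is represented by the pair (o, i).\<close>
definition linear_rule :: "('o,'a) cat \<Rightarrow> 'a \<times> 'a \<Rightarrow> bool" where
  "linear_rule C r \<longleftrightarrow> monic C (fst r) \<and> monic C (snd r) \<and> Dom C (fst r) = Dom C (snd r)"

definition iso_class :: "('o,'a) cat \<Rightarrow> 'o \<Rightarrow> 'o set" where
  "iso_class C X = {Y \<in> Ob C. iso_obj C Y X}"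

text \<open>Basis vector |X>, as a finitely supported function on isomorphism classes.\<close>
definition ket :: "('o,'a) cat \<Rightarrow> 'o \<Rightarrow> 'o set \<Rightarrow> real" where
  "ket C X = (\<lambda>Y. if Y = iso_class C X then 1 else 0)"

definition matches :: "('o,'a) cat \<Rightarrow> 'a \<times> 'a \<Rightarrow> 'o \<Rightarrow> 'a set" where
  "matches C r X = {m \<in> hom C (Cod C (snd r)) X. monic C m}"

definition fpc_k :: "('o,'a) cat \<Rightarrow> 'a \<Rightarrow> 'a \<Rightarrow> 'a" where
  "fpc_k C m i = snd (SOME db. is_FPC C m i (fst db) (snd db))"

definition po_obj :: "('o,'a) cat \<Rightarrow> 'a \<Rightarrow> 'a \<Rightarrow> 'o" where
  "po_obj C ro k = Cod C (fst (SOME cd. is_pushout C ro k (fst cd) (snd cd)))"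

definition rho :: "('o,'a) cat \<Rightarrow> 'a \<times> 'a \<Rightarrow> 'o \<Rightarrow> 'o set \<Rightarrow> real" where
  "rho C r X = (\<lambda>Y. \<Sum>m\<in>matches C r X. ket C (po_obj C (fst r) (fpc_k C m (snd r))) Y)"

definition Obs :: "('o,'a) cat \<Rightarrow> 'o \<Rightarrow> 'o \<Rightarrow> 'o set \<Rightarrow> real" where
  "Obs C M = rho C (Idt C M, Idt C M)"

definition bra :: "('o set \<Rightarrow> real) \<Rightarrow> real" where
  "bra v = (\<Sum>Y\<in>{Y. v Y \<noteq> 0}. v Y)"

end

theory Submission
  imports Defs
begin


lemma cat_dom: "is_category C \<Longrightarrow> f \<in> Ar C \<Longrightarrow> Dom C f \<in> Ob C"
  by (simp add: is_category_def)
lemma cat_cod: "is_category C \<Longrightarrow> f \<in> Ar C \<Longrightarrow> Cod C f \<in> Ob C"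
  by (simp add: is_category_def)
lemma cat_id: "is_category C \<Longrightarrow> X \<in> Ob C \<Longrightarrow> Idt C X \<in> Ar C \<and> Dom C (Idt C X) = X \<and> Cod C (Idt C X) = X"
  by (simp add: is_category_def)
lemma cat_comp: "is_category C \<Longrightarrow> f \<in> Ar C \<Longrightarrow> g \<in> Ar C \<Longrightarrow> Cod C f = Dom C g \<Longrightarrow>
   Comp C g f \<in> Ar C \<and> Dom C (Comp C g f) = Dom C f \<and> Cod C (Comp C g f) = Cod C g"
  by (simp add: is_category_def)
lemma cat_idl: "is_category C \<Longrightarrow> f \<in> Ar C \<Longrightarrow> Comp C (Idt C (Cod C f)) f = f"
  by (simp add: is_category_def)
lemma cat_idr: "is_category C \<Longrightarrow> f \<in> Ar C \<Longrightarrow> Comp C f (Idt C (Dom C f)) = f"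
  by (simp add: is_category_def)
lemma cat_assoc: "is_category C \<Longrightarrow> f \<in> Ar C \<Longrightarrow> g \<in> Ar C \<Longrightarrow> h \<in> Ar C \<Longrightarrow> Cod C f = Dom C g \<Longrightarrow> Cod C g = Dom C h \<Longrightarrow>
         Comp C h (Comp C g f) = Comp C (Comp C h g) f"
  unfolding is_category_def by blast

lemma id_monic: "is_category C \<Longrightarrow> X \<in> Ob C \<Longrightarrow> monic C (Idt C X)"
  unfolding monic_def by (metis cat_id cat_idl)

lemma iso_sym: "isomorphism C f \<Longrightarrow> \<exists>g. isomorphism C g \<and> Dom C g = Cod C f \<and> Cod C g = Dom C f"
  unfolding isomorphism_def by metis

lemma iso_comp:
  assumes cat: "is_category C" and f: "isomorphism C f" and g: "isomorphism C g" and fg: "Cod C f = Dom C g"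
  shows "isomorphism C (Comp C g f)"
proof -
  obtain f' where f': "f' \<in> Ar C" "Dom C f' = Cod C f" "Cod C f' = Dom C f"
    "Comp C f' f = Idt C (Dom C f)" "Comp C f f' = Idt C (Cod C f)" "f \<in> Ar C"
    using f unfolding isomorphism_def by blast
  obtain g' where g': "g' \<in> Ar C" "Dom C g' = Cod C g" "Cod C g' = Dom C g"
    "Comp C g' g = Idt C (Dom C g)" "Comp C g g' = Idt C (Cod C g)" "g \<in> Ar C"
    using g unfolding isomorphism_def by blast
  have gf: "Comp C g f \<in> Ar C" "Dom C (Comp C g f) = Dom C f" "Cod C (Comp C g f) = Cod C g"
    using cat_comp[OF cat f'(6) g'(6) fg] by auto
  have fg': "Comp C f' g' \<in> Ar C" "Dom C (Comp C f' g') = Cod C g" "Cod C (Comp C f' g') = Dom C f"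
    using cat_comp[OF cat g'(1) f'(1)] g' f' fg by auto
  have "Comp C (Comp C f' g') (Comp C g f) = Comp C f' (Comp C g' (Comp C g f))"
    using cat_assoc[OF cat gf(1) g'(1) f'(1)] gf g' f' fg by simp
  also have "Comp C g' (Comp C g f) = Comp C (Comp C g' g) f"
    using cat_assoc[OF cat f'(6) g'(6) g'(1)] fg g' by simp
  also have "\<dots> = f" using g' fg cat_idl[OF cat f'(6)] by simp
  finally have 1: "Comp C (Comp C f' g') (Comp C g f) = Idt C (Dom C (Comp C g f))" using f' gf by simp
  have "Comp C (Comp C g f) (Comp C f' g') = Comp C g (Comp C f (Comp C f' g'))"
    using cat_assoc[OF cat fg'(1) f'(6) g'(6)] fg' f' fg by simp
  also have "Comp C f (Comp C f' g') = Comp C (Comp C f f') g'"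
    using cat_assoc[OF cat g'(1) f'(1) f'(6)] g' f' fg by simp
  also have "\<dots> = g'" using f' fg g' cat_idl[OF cat g'(1)] by simp
  finally have 2: "Comp C (Comp C g f) (Comp C f' g') = Idt C (Cod C (Comp C g f))" using g' gf by simp
  show ?thesis unfolding isomorphism_def using gf fg' 1 2 by metis
qed

lemma iso_obj_sym: "iso_obj C X Y \<Longrightarrow> iso_obj C Y X"
  unfolding iso_obj_def hom_def using iso_sym isomorphism_def by (smt (verit) mem_Collect_eq)

lemma iso_obj_trans: "is_category C \<Longrightarrow> iso_obj C X Y \<Longrightarrow> iso_obj C Y Z \<Longrightarrow> iso_obj C X Z"
  unfolding iso_obj_def hom_def
  by (smt (verit, best) cat_comp iso_comp isomorphism_def mem_Collect_eq)

lemma iso_class_eq: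
  assumes cat: "is_category C" and h: "iso_obj C X Y"
  shows "iso_class C X = iso_class C Y"
proof -
  have "iso_obj C Z X \<longleftrightarrow> iso_obj C Z Y" for Z
    using iso_obj_trans[OF cat _ h] iso_obj_trans[OF cat _ iso_obj_sym[OF h]] by metis
  thus ?thesis unfolding iso_class_def by simp
qed

lemma iso_obj_I:
  assumes iso: "isomorphism C f" and cat: "is_category C"
  shows "iso_obj C (Dom C f) (Cod C f)"
proof -
  have f: "f \<in> Ar C" using iso unfolding isomorphism_def by simp
  have "f \<in> hom C (Dom C f) (Cod C f)" unfolding hom_def using f by simp
  thus ?thesis unfolding iso_obj_def using cat_dom[OF cat f] cat_cod[OF cat f] iso by blast
qed


lemma pb_trivial:
  assumes cat: "is_category C" and f: "f \<in> Ar C"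
  shows "is_pullback C (Idt C (Dom C f)) f f (Idt C (Cod C f))"
  unfolding is_pullback_def comm_sq_def
  using cat_id[OF cat cat_dom[OF cat f]] cat_id[OF cat cat_cod[OF cat f]] f
    cat_idl[OF cat] cat_idr[OF cat]
  by (smt (verit))

lemma fpc_id_iso:
  assumes cat: "is_category C" and m: "m \<in> Ar C" and M: "Dom C m = M"
    and F: "is_FPC C m (Idt C M) d b"
  shows "isomorphism C d \<and> Cod C d = Cod C m \<and> Dom C d = Cod C b \<and> Dom C b = M \<and> b \<in> Ar C"
proof -
  have MO: "M \<in> Ob C" using cat_dom[OF cat m] M by simp
  note idM = cat_id[OF cat MO]
  have pb: "is_pullback C (Idt C M) b m d" using F unfolding is_FPC_def by simp
  hence sq: "b \<in> Ar C" "d \<in> Ar C" "Dom C b = M" "Cod C b = Dom C d" "Cod C m = Cod C d"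
     "Comp C m (Idt C M) = Comp C d b"
    unfolding is_pullback_def comm_sq_def using idM by auto
  have db: "Comp C d b = m" using sq(6) cat_idr[OF cat m] M by simp
  have univ: "\<And>x y z w. is_pullback C x y m z \<Longrightarrow> w \<in> Ar C \<Longrightarrow> Dom C w = Dom C x \<Longrightarrow> Cod C w = M \<Longrightarrow>
        Comp C (Idt C M) w = x \<Longrightarrow>
        (\<exists>!u. u \<in> Ar C \<and> Dom C u = Cod C y \<and> Cod C u = Dom C d \<and>
              Comp C d u = z \<and> Comp C u y = Comp C b w)"
    using F idM unfolding is_FPC_def by auto
  have idid: "Comp C (Idt C M) (Idt C M) = Idt C M" using cat_idl[OF cat, of "Idt C M"] idM by simp
  obtain u where u: "u \<in> Ar C" "Dom C u = Cod C m" "Cod C u = Dom C d" "Comp C d u = Idt C (Cod C m)"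
     "Comp C u m = Comp C b (Idt C M)"
    using univ[OF pb_trivial[OF cat m, unfolded M] idM[THEN conjunct1]] idM idid by auto
  have um: "Comp C u m = b" using u(5) cat_idr[OF cat sq(1)] sq(3) by simp
  have U: "\<exists>!u'. u' \<in> Ar C \<and> Dom C u' = Cod C b \<and> Cod C u' = Dom C d \<and>
              Comp C d u' = d \<and> Comp C u' b = Comp C b (Idt C M)"
    using univ[OF pb idM[THEN conjunct1]] idM idid by auto
  note idK = cat_id[OF cat cat_dom[OF cat sq(2)]]
  have ud: "Comp C u d \<in> Ar C" "Dom C (Comp C u d) = Dom C d" "Cod C (Comp C u d) = Dom C d"
    using cat_comp[OF cat sq(2) u(1)] u sq by auto
  have c1: "Comp C d (Comp C u d) = d"
    using cat_assoc[OF cat sq(2) u(1) sq(2)] u sq cat_idl[OF cat sq(2)] by simp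
  have c2: "Comp C (Comp C u d) b = Comp C b (Idt C M)"
    using cat_assoc[OF cat sq(1) sq(2) u(1)] u sq db um cat_idr[OF cat sq(1)] by simp
  have c3: "Comp C d (Idt C (Dom C d)) = d" using cat_idr[OF cat sq(2)] .
  have c4: "Comp C (Idt C (Dom C d)) b = Comp C b (Idt C M)"
    using cat_idl[OF cat sq(1)] cat_idr[OF cat sq(1)] sq by simp
  have "Comp C u d = Idt C (Dom C d)"
    using U ud c1 c2 c3 c4 idK sq by metis
  hence "isomorphism C d" unfolding isomorphism_def using u sq by metis
  thus ?thesis using sq by simp
qed

lemma po_id_iso:
  assumes cat: "is_category C" and b: "b \<in> Ar C" and M: "Dom C b = M"
    and P: "is_pushout C (Idt C M) b c d"
  shows "isomorphism C d \<and> Dom C d = Cod C b"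
proof -
  have MO: "M \<in> Ob C" using cat_dom[OF cat b] M by simp
  note idM = cat_id[OF cat MO]
  have sq: "c \<in> Ar C" "d \<in> Ar C" "M = Dom C c" "Cod C b = Dom C d" "Cod C c = Cod C d"
     "Comp C c (Idt C M) = Comp C d b"
    using P unfolding is_pushout_def comm_sq_def using idM M by auto
  have db: "Comp C d b = c" using sq(6) cat_idr[OF cat sq(1)] sq(3) by simp
  have univ: "\<And>x y. x \<in> Ar C \<Longrightarrow> y \<in> Ar C \<Longrightarrow> Cod C x = Cod C y \<Longrightarrow> Dom C x = M \<Longrightarrow> Dom C y = Cod C b \<Longrightarrow>
        Comp C x (Idt C M) = Comp C y b \<Longrightarrow>
        (\<exists>!u. u \<in> Ar C \<and> Dom C u = Cod C c \<and> Cod C u = Cod C x \<and>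
              Comp C u c = x \<and> Comp C u d = y)"
    using P idM unfolding is_pushout_def by auto
  note idK = cat_id[OF cat cat_cod[OF cat b]]
  note idP = cat_id[OF cat cat_cod[OF cat sq(2)]]
  have e1: "Comp C b (Idt C M) = Comp C (Idt C (Cod C b)) b"
    using cat_idl[OF cat b] cat_idr[OF cat b] M by simp
  obtain u where u: "u \<in> Ar C" "Dom C u = Cod C c" "Cod C u = Cod C b" "Comp C u c = b"
     "Comp C u d = Idt C (Cod C b)"
    using univ[OF b idK[THEN conjunct1] _ M _ e1] idK by auto
  have U: "\<exists>!u'. u' \<in> Ar C \<and> Dom C u' = Cod C c \<and> Cod C u' = Cod C c \<and>
              Comp C u' c = c \<and> Comp C u' d = d"
    using univ[OF sq(1) sq(2) sq(5) sq(3)[symmetric] sq(4)[symmetric] sq(6)] by simp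
  have du: "Comp C d u \<in> Ar C" "Dom C (Comp C d u) = Cod C c" "Cod C (Comp C d u) = Cod C c"
    using cat_comp[OF cat u(1) sq(2)] u sq by auto
  have c1: "Comp C (Comp C d u) c = c"
    using cat_assoc[OF cat sq(1) u(1) sq(2)] u sq db by simp
  have c2: "Comp C (Comp C d u) d = d"
    using cat_assoc[OF cat sq(2) u(1) sq(2)] u sq cat_idr[OF cat sq(2)] by simp
  have c3: "Comp C (Idt C (Cod C c)) c = c" using cat_idl[OF cat sq(1)] .
  have c4: "Comp C (Idt C (Cod C c)) d = d" using cat_idl[OF cat sq(2)] sq(5) by simp
  have "Comp C d u = Idt C (Cod C c)"
    using U du c1 c2 c3 c4 idP sq(5) by metis
  hence "isomorphism C d" unfolding isomorphism_def using u sq by metis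
  thus ?thesis using sq by simp
qed


lemma po_class:
  assumes cat: "is_category C" and adh: "adhesive C" and fpc: "FPCs_of_monos C"
    and MO: "M \<in> Ob C" and m: "m \<in> hom C M X" and mm: "monic C m"
  shows "iso_class C (po_obj C (Idt C M) (fpc_k C m (Idt C M))) = iso_class C X"
proof -
  note idM = cat_id[OF cat MO]
  have mA: "m \<in> Ar C" "Dom C m = M" "Cod C m = X" using m unfolding hom_def by auto
  have F0: "\<forall>i m. monic C i \<and> monic C m \<and> Cod C i = Dom C m \<longrightarrow>
      (\<exists>d b. is_FPC C m i d b \<and> monic C d \<and> monic C b)"
    using fpc unfolding FPCs_of_monos_def .
  have "monic C (Idt C M) \<and> monic C m \<and> Cod C (Idt C M) = Dom C m"
    using id_monic[OF cat MO] mm idM mA by simp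
  then obtain d0 b0 where "is_FPC C m (Idt C M) d0 b0" using F0 by blast
  hence "\<exists>db. is_FPC C m (Idt C M) (fst db) (snd db)" by (intro exI[of _ "(d0, b0)"]) simp
  hence F: "is_FPC C m (Idt C M) (fst (SOME db. is_FPC C m (Idt C M) (fst db) (snd db)))
        (fpc_k C m (Idt C M))"
    unfolding fpc_k_def by (rule someI_ex)
  define b where "b = fpc_k C m (Idt C M)"
  obtain d where F': "is_FPC C m (Idt C M) d b" using F b_def by blast
  have D: "isomorphism C d" "Cod C d = X" "Dom C d = Cod C b" "Dom C b = M" "b \<in> Ar C"
    using fpc_id_iso[OF cat mA(1) mA(2) F'] mA by auto
  have A2: "\<forall>a\<in>Ar C. \<forall>b\<in>Ar C. Dom C a = Dom C b \<longrightarrow> (monic C a \<or> monic C b) \<longrightarrow>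
         (\<exists>c d. is_pushout C a b c d)"
    using adh unfolding adhesive_def by (rule conjunct1[OF conjunct2])
  have "Idt C M \<in> Ar C" "b \<in> Ar C" "Dom C (Idt C M) = Dom C b" "monic C (Idt C M)"
    using idM D id_monic[OF cat MO] by auto
  then obtain c0 d0 where "is_pushout C (Idt C M) b c0 d0" using A2 by blast
  hence "\<exists>cd. is_pushout C (Idt C M) b (fst cd) (snd cd)" by (intro exI[of _ "(c0, d0)"]) simp
  hence P: "is_pushout C (Idt C M) b (fst (SOME cd. is_pushout C (Idt C M) b (fst cd) (snd cd)))
         (snd (SOME cd. is_pushout C (Idt C M) b (fst cd) (snd cd)))"
    by (rule someI_ex)
  define c where "c = fst (SOME cd. is_pushout C (Idt C M) b (fst cd) (snd cd))"
  define d' where "d' = snd (SOME cd. is_pushout C (Idt C M) b (fst cd) (snd cd))"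
  have P': "is_pushout C (Idt C M) b c d'" using P c_def d'_def by simp
  have po: "po_obj C (Idt C M) b = Cod C c" unfolding po_obj_def c_def by simp
  have cd: "Cod C c = Cod C d'" using P' unfolding is_pushout_def comm_sq_def by simp
  have D': "isomorphism C d'" "Dom C d' = Cod C b" using po_id_iso[OF cat D(5) D(4) P'] by auto
  have i1: "iso_obj C (Cod C b) X" using iso_obj_I[OF D(1) cat] D by simp
  have i2: "iso_obj C (Cod C b) (Cod C c)" using iso_obj_I[OF D'(1) cat] D' cd by simp
  show ?thesis unfolding b_def[symmetric] po
    using iso_class_eq[OF cat i1] iso_class_eq[OF cat i2] by simp
qed

lemma bra_eq: "finite S \<Longrightarrow> {Y. f Y \<noteq> 0} \<subseteq> S \<Longrightarrow> bra f = sum f S"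
  unfolding bra_def by (rule sum.mono_neutral_left) auto

lemma ket_nonneg: "0 \<le> ket C X Y" and ket_le1: "ket C X Y \<le> 1"
  unfolding ket_def by auto

lemma rho_nonneg: "0 \<le> rho C r X Y"
  unfolding rho_def by (simp add: sum_nonneg ket_nonneg)

lemma rho_le_card: "rho C r X Y \<le> real (card (matches C r X))"
proof -
  have "rho C r X Y \<le> (\<Sum>m\<in>matches C r X. 1)"
    unfolding rho_def by (rule sum_mono) (simp add: ket_le1)
  thus ?thesis by simp
qed

lemma rho_supp:
  "{Y. rho C r X Y \<noteq> 0} \<subseteq> (\<lambda>m. iso_class C (po_obj C (fst r) (fpc_k C m (snd r)))) ` matches C r X"
proof
  fix Y assume "Y \<in> {Y. rho C r X Y \<noteq> 0}"
  then obtain m where "m \<in> matches C r X" "ket C (po_obj C (fst r) (fpc_k C m (snd r))) Y \<noteq> 0"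
    unfolding rho_def by (meson mem_Collect_eq sum.neutral)
  thus "Y \<in> (\<lambda>m. iso_class C (po_obj C (fst r) (fpc_k C m (snd r)))) ` matches C r X"
    unfolding ket_def by (auto split: if_splits)
qed

lemma rho_supp_fin: "finite {Y. rho C r X Y \<noteq> 0}"
proof (cases "finite (matches C r X)")
  case True
  show ?thesis using finite_subset[OF rho_supp finite_imageI[OF True]] .
next
  case False
  then show ?thesis unfolding rho_def by simp
qed

lemma rho_sum:
  assumes S: "finite S" "{Y. rho C r X Y \<noteq> 0} \<subseteq> S"
  shows "sum (rho C r X) S = real (card (matches C r X))"
proof (cases "finite (matches C r X)")
  case False
  then show ?thesis unfolding rho_def by simp
next
  case True
  have in_S: "iso_class C (po_obj C (fst r) (fpc_k C m (snd r))) \<in> S" if m: "m \<in> matches C r X" for m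
  proof -
    let ?P = "po_obj C (fst r) (fpc_k C m (snd r))"
    have "ket C ?P (iso_class C ?P) \<le> rho C r X (iso_class C ?P)"
      unfolding rho_def by (rule member_le_sum[OF m]) (auto simp: ket_nonneg True)
    hence "rho C r X (iso_class C ?P) \<noteq> 0" unfolding ket_def by auto
    thus ?thesis using S by auto
  qed
  have "sum (rho C r X) S = (\<Sum>m\<in>matches C r X. \<Sum>Y\<in>S. ket C (po_obj C (fst r) (fpc_k C m (snd r))) Y)"
    unfolding rho_def by (rule sum.swap)
  also have "\<dots> = (\<Sum>m\<in>matches C r X. 1)"
  proof (rule sum.cong[OF refl])
    fix m assume m: "m \<in> matches C r X"
    have "(\<Sum>Y\<in>S. ket C (po_obj C (fst r) (fpc_k C m (snd r))) Y)
       = (\<Sum>Y\<in>S. if Y = iso_class C (po_obj C (fst r) (fpc_k C m (snd r))) then 1 else 0)"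
      unfolding ket_def by simp
    also have "\<dots> = 1" using S(1) in_S[OF m] by simp
    finally show "(\<Sum>Y\<in>S. ket C (po_obj C (fst r) (fpc_k C m (snd r))) Y) = 1" .
  qed
  finally show ?thesis by simp
qed

lemma bra_rho: "bra (rho C r X) = real (card (matches C r X))"
proof -
  have f: "finite {Y. rho C r X Y \<noteq> 0}" by (rule rho_supp_fin)
  show ?thesis by (simp add: bra_eq[OF f subset_refl] rho_sum[OF f subset_refl])
qed



theorem mainTheorem5:
  fixes C :: "('o,'a) cat" and J :: "'j set" and p :: "'j \<Rightarrow> 'a \<times> 'a" and \<kappa> :: "'j \<Rightarrow> real"
    and H :: "'o \<Rightarrow> 'o set \<Rightarrow> real"
  assumes cat: "is_category C"
    and adh: "adhesive C"
    and fin: "finitary C"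
    and init: "\<exists>Z. strict_initial C Z"
    and fpc: "FPCs_of_monos C"
    and J_fin: "finite J"
    and rules: "\<forall>j\<in>J. linear_rule C (p j)"
    and rates: "\<forall>j\<in>J. \<kappa> j > 0"
    and H_def: "H \<equiv> (\<lambda>X Y. (\<Sum>j\<in>J. \<kappa> j * rho C (p j) X Y)
                          - (\<Sum>j\<in>J. \<kappa> j * Obs C (Cod C (snd (p j))) X Y))"
  shows "(\<forall>X\<in>Ob C. finite {Y. H X Y \<noteq> 0} \<and> H X (iso_class C X) \<le> 0 \<and>
              (\<forall>Y. Y \<noteq> iso_class C X \<longrightarrow> H X Y \<ge> 0) \<and> bra (H X) = 0)
       \<and> (\<forall>M\<in>Ob C. \<forall>X\<in>Ob C.
              Obs C M X = (\<lambda>Y. real (card {m \<in> hom C M X. monic C m}) * ket C X Y))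
       \<and> (\<forall>r. linear_rule C r \<longrightarrow>
              (\<forall>X\<in>Ob C. bra (rho C r X) = bra (Obs C (Cod C (snd r)) X)))"
  proof -
  have mObs: "matches C (Idt C I, Idt C I) X = {m \<in> hom C I X. monic C m}" if "I \<in> Ob C" for I X
    unfolding matches_def using cat_id[OF cat that] by simp
  have mr: "matches C r X = {m \<in> hom C (Cod C (snd r)) X. monic C m}" for r X
    unfolding matches_def by simp
  have part2: "\<forall>M\<in>Ob C. \<forall>X\<in>Ob C.
              Obs C M X = (\<lambda>Y. real (card {m \<in> hom C M X. monic C m}) * ket C X Y)"
  proof (intro ballI ext)
    fix M X Y assume M: "M \<in> Ob C" and X: "X \<in> Ob C"
    have "Obs C M X Y = (\<Sum>m\<in>{m \<in> hom C M X. monic C m}. ket C (po_obj C (Idt C M) (fpc_k C m (Idt C M))) Y)"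
      unfolding Obs_def rho_def using mObs[OF M] by simp
    also have "\<dots> = (\<Sum>m\<in>{m \<in> hom C M X. monic C m}. ket C X Y)"
    proof (rule sum.cong[OF refl])
      fix m assume "m \<in> {m \<in> hom C M X. monic C m}"
      hence "iso_class C (po_obj C (Idt C M) (fpc_k C m (Idt C M))) = iso_class C X"
        using po_class[OF cat adh fpc M] by blast
      thus "ket C (po_obj C (Idt C M) (fpc_k C m (Idt C M))) Y = ket C X Y"
        unfolding ket_def by simp
    qed
    also have "\<dots> = real (card {m \<in> hom C M X. monic C m}) * ket C X Y" by simp
    finally show "Obs C M X Y = real (card {m \<in> hom C M X. monic C m}) * ket C X Y" .
  qed
  have Iob: "Cod C (snd r) \<in> Ob C" if "linear_rule C r" for r
    using that cat_cod[OF cat] unfolding linear_rule_def monic_def by blast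
  have cardeq: "card (matches C (Idt C (Cod C (snd r)), Idt C (Cod C (snd r))) X) = card (matches C r X)"
    if "linear_rule C r" for r X
    using mObs[OF Iob[OF that]] mr by simp
  have part3: "\<forall>r. linear_rule C r \<longrightarrow>
              (\<forall>X\<in>Ob C. bra (rho C r X) = bra (Obs C (Cod C (snd r)) X))"
    unfolding Obs_def bra_rho by (intro allI impI ballI) (simp add: cardeq)
  have part1: "\<forall>X\<in>Ob C. finite {Y. H X Y \<noteq> 0} \<and> H X (iso_class C X) \<le> 0 \<and>
              (\<forall>Y. Y \<noteq> iso_class C X \<longrightarrow> H X Y \<ge> 0) \<and> bra (H X) = 0"
  proof
    fix X assume X: "X \<in> Ob C"
    define R where "R j = rho C (p j) X" for j
    define Q where "Q j = Obs C (Cod C (snd (p j))) X" for j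
    define c where "c j = real (card (matches C (p j) X))" for j
    have HX: "H X Y = (\<Sum>j\<in>J. \<kappa> j * R j Y) - (\<Sum>j\<in>J. \<kappa> j * Q j Y)" for Y
      unfolding H_def R_def Q_def by simp
    have Qj: "Q j Y = c j * ket C X Y" if "j \<in> J" for j Y
      using part2 Iob[of "p j"] rules that X unfolding Q_def c_def mr by auto
    have Qrho: "Q j = rho C (Idt C (Cod C (snd (p j))), Idt C (Cod C (snd (p j)))) X" for j
      unfolding Q_def Obs_def ..
    define S where "S = (\<Union>j\<in>J. {Y. R j Y \<noteq> 0} \<union> {Y. Q j Y \<noteq> 0})"
    have Sfin: "finite S" unfolding S_def R_def Qrho using J_fin by (auto simp del: prod.collapse intro: rho_supp_fin)
    have supp: "{Y. H X Y \<noteq> 0} \<subseteq> S"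
    proof
      fix Y assume "Y \<in> {Y. H X Y \<noteq> 0}"
      hence "H X Y \<noteq> 0" by simp
      show "Y \<in> S"
      proof (rule ccontr)
        assume "Y \<notin> S"
        hence "\<forall>j\<in>J. R j Y = 0 \<and> Q j Y = 0" unfolding S_def by auto
        hence "H X Y = 0" unfolding HX by simp
        thus False using \<open>H X Y \<noteq> 0\<close> by simp
      qed
    qed
    have fin: "finite {Y. H X Y \<noteq> 0}" using finite_subset[OF supp Sfin] .
    have sR: "sum (R j) S = c j" if "j \<in> J" for j
      unfolding R_def c_def by (rule rho_sum[OF Sfin]) (use that in \<open>auto simp: S_def R_def\<close>)
    have sO: "sum (Q j) S = c j" if "j \<in> J" for j
    proof -
      have "sum (Q j) S = real (card (matches C (Idt C (Cod C (snd (p j))), Idt C (Cod C (snd (p j)))) X))"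
        unfolding Qrho by (rule rho_sum[OF Sfin]) (use that in \<open>auto simp: S_def Qrho\<close>)
      thus ?thesis unfolding c_def using cardeq[of "p j" X] rules that by simp
    qed
    have "bra (H X) = sum (H X) S" by (rule bra_eq[OF Sfin supp])
    also have "\<dots> = (\<Sum>j\<in>J. \<kappa> j * sum (R j) S) - (\<Sum>j\<in>J. \<kappa> j * sum (Q j) S)"
      unfolding HX by (simp add: sum_subtractf sum_distrib_left sum.swap[of _ S J])
    also have "\<dots> = 0" using sR sO by simp
    finally have b: "bra (H X) = 0" .
    have diag: "H X (iso_class C X) \<le> 0"
    proof -
      have "(\<Sum>j\<in>J. \<kappa> j * R j (iso_class C X)) \<le> (\<Sum>j\<in>J. \<kappa> j * Q j (iso_class C X))"
      proof (rule sum_mono)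
        fix j assume j: "j \<in> J"
        have "R j (iso_class C X) \<le> c j" unfolding R_def c_def by (rule rho_le_card)
        also have "c j = Q j (iso_class C X)" using Qj[OF j] by (simp add: ket_def)
        finally show "\<kappa> j * R j (iso_class C X) \<le> \<kappa> j * Q j (iso_class C X)"
          using rates j by (simp add: mult_left_mono)
      qed
      thus ?thesis unfolding HX by simp
    qed
    have off: "\<forall>Y. Y \<noteq> iso_class C X \<longrightarrow> H X Y \<ge> 0"
    proof (intro allI impI)
      fix Y assume Y: "Y \<noteq> iso_class C X"
      have "(\<Sum>j\<in>J. \<kappa> j * Q j Y) = 0" using Qj Y by (simp add: ket_def)
      moreover have "(\<Sum>j\<in>J. \<kappa> j * R j Y) \<ge> 0"
        using rates by (intro sum_nonneg) (simp add: R_def rho_nonneg less_imp_le)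
      ultimately show "H X Y \<ge> 0" unfolding HX by simp
    qed
    show "finite {Y. H X Y \<noteq> 0} \<and> H X (iso_class C X) \<le> 0 \<and>
              (\<forall>Y. Y \<noteq> iso_class C X \<longrightarrow> H X Y \<ge> 0) \<and> bra (H X) = 0"
      using fin diag off b by simp
  qed
  show ?thesis using part1 part2 part3 by blast
qed

end
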